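(* Let $J$ be an interval of ${}^\bullet\mathbb{R}$. Then both $J$ and its interior $\mathrm{int}(J)$ are connected in the Fermat topology.
   Context: Fermat reals: let $\mathbb{R}_o[t]$ be the set of maps $x:\mathbb{R}_{\ge0}\to\mathbb{R}$, $t\mapsto x_t$, of the form $x_t=r+\sum_{i=1}^k\alpha_i t^{a_i}+o(t)$ as $t\to0^+$, with $k\in\mathbb{N}$, $r,\alpha_i\in\mathbb{R}$, $a_i\in\mathbb{R}_{\ge0}$. Write $x\sim y$ iff $x_t=y_t+o(t)$ as $t\to0^+$. The ring of Fermat reals is ${}^\bullet\mathbb{R}:=\mathbb{R}_o[t]/\sim$ with pointwise operations; $\mathbb{R}\subseteq{}^\bullet\mathbb{R}$ via constants. The standard part of $x=[x_t]$ is ${}^\circ x:=x_0$. ${}^\bullet\mathbb{R}$ is totally ordered by: $x\le y$ iff for representatives there is $z\in\mathbb{R}_o[t]$ with $z\sim0$ and $x_t\le y_t+z_t$ for all sufficiently small $t\ge0$. Let $\overline{{}^\bullet\mathbb{R}}:={}^\bullet\mathbb{R}\cup\{-\infty,+\infty\}$ with ${}^\circ(\pm\infty):=\pm\infty$. An interval of ${}^\bullet\mathbb{R}$ is a set $[a,b]$, $(a,b)$, $[a,b)$ or $(a,b]$ of points $x\in{}^\bullet\mathbb{R}$ satisfying the corresponding inequalities, where $a\le b$ are in $\overline{{}^\bullet\mathbb{R}}$. The Fermat topology on ${}^\bullet\mathbb{R}$ has as open sets the sets ${}^\bullet V:=\{x\in{}^\bullet\mathbb{R}:{}^\circ x\in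 V\}$ for $V\subseteq\mathbb{R}$ open; subsets carry the subspace topology, and $\mathrm{int}$ denotes interior in the Fermat topology (for an interval with endpoints $a,b$ it equals $\{x\in{}^\bullet\mathbb{R}:{}^\circ a<{}^\circ x<{}^\circ b\}$). *)

theory Defs
  imports "HOL-Analysis.Analysis"
begin

definition little_o_t :: "(real \<Rightarrow> real) \<Rightarrow> bool" where
  "little_o_t h \<longleftrightarrow> h 0 = 0 \<and> ((\<lambda>t. h t / t) \<longlongrightarrow> 0) (at_right 0)"

text \<open>t^a for t \<ge> 0, a \<ge> 0, with the convention 0^0 = 1.\<close>
definition tpow :: "real \<Rightarrow> real \<Rightarrow> real" where
  "tpow t a = (if a = 0 then 1 else t powr a)"

text \<open>The set R_o[t] (only the values at t \<ge> 0 are relevant).\<close>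
definition Ro :: "(real \<Rightarrow> real) \<Rightarrow> bool" where
  "Ro x \<longleftrightarrow> (\<exists>(r::real) (k::nat) (\<alpha>::nat \<Rightarrow> real) (a::nat \<Rightarrow> real).
      (\<forall>i<k. a i \<ge> 0) \<and>
      little_o_t (\<lambda>t. x t - (r + (\<Sum>i<k. \<alpha> i * tpow t (a i)))))"

definition fr_rel :: "(real \<Rightarrow> real) \<Rightarrow> (real \<Rightarrow> real) \<Rightarrow> bool" where
  "fr_rel x y \<longleftrightarrow> Ro x \<and> Ro y \<and> little_o_t (\<lambda>t. x t - y t)"

lemma little_o_t_zero: "little_o_t (\<lambda>t. 0)"
  by (simp add: little_o_t_def)

lemma little_o_t_minus: "little_o_t h \<Longrightarrow> little_o_t (\<lambda>t. - h t)"
  unfolding little_o_t_def by (auto dest: tendsto_minus)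

lemma little_o_t_add: "little_o_t h \<Longrightarrow> little_o_t g \<Longrightarrow> little_o_t (\<lambda>t. h t + g t)"
  unfolding little_o_t_def by (auto simp: add_divide_distrib dest: tendsto_add)

lemma Ro_zero: "Ro (\<lambda>t. 0)"
  unfolding Ro_def by (rule exI[of _ 0], rule exI[of _ 0]) (simp add: little_o_t_zero)

lemma part_equivp_fr_rel: "part_equivp fr_rel"
proof (rule part_equivpI)
  show "\<exists>x. fr_rel x x" using Ro_zero by (auto simp: fr_rel_def little_o_t_zero)
  show "symp fr_rel"
  proof (rule sympI)
    fix x y assume "fr_rel x y"
    then show "fr_rel y x"
      using little_o_t_minus[of "\<lambda>t. x t - y t"] by (simp add: fr_rel_def)
  qed
  show "transp fr_rel"
  proof (rule transpI)
    fix x y z assume "fr_rel x y" "fr_rel y z"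
    then show "fr_rel x z"
      using little_o_t_add[of "\<lambda>t. x t - y t" "\<lambda>t. y t - z t"] by (simp add: fr_rel_def)
  qed
qed

quotient_type fermat = "real \<Rightarrow> real" / partial: fr_rel
  by (rule part_equivp_fr_rel)

lift_definition st :: "fermat \<Rightarrow> real" is "\<lambda>x. x 0"
  by (simp add: fr_rel_def little_o_t_def)

definition fle :: "fermat \<Rightarrow> fermat \<Rightarrow> bool" where
  "fle p q \<longleftrightarrow> (\<exists>x y z. fr_rel x x \<and> fr_rel y y \<and> abs_fermat x = p \<and> abs_fermat y = q \<and>
      fr_rel z (\<lambda>t. 0) \<and> (\<exists>\<delta>>0. \<forall>t. 0 \<le> t \<and> t < \<delta> \<longrightarrow> x t \<le> y t + z t))"

definition flt :: "fermat \<Rightarrow> fermat \<Rightarrow> bool" where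
  "flt p q \<longleftrightarrow> fle p q \<and> p \<noteq> q"

datatype efermat = NegInf | Fin fermat | PosInf

fun efle :: "efermat \<Rightarrow> efermat \<Rightarrow> bool" where
  "efle NegInf _ = True"
| "efle _ PosInf = True"
| "efle (Fin a) (Fin b) = fle a b"
| "efle _ _ = False"

definition eflt :: "efermat \<Rightarrow> efermat \<Rightarrow> bool" where
  "eflt a b \<longleftrightarrow> efle a b \<and> a \<noteq> b"

definition fIcc :: "efermat \<Rightarrow> efermat \<Rightarrow> fermat set" where
  "fIcc a b = {x. efle a (Fin x) \<and> efle (Fin x) b}"
definition fIoo :: "efermat \<Rightarrow> efermat \<Rightarrow> fermat set" where
  "fIoo a b = {x. eflt a (Fin x) \<and> eflt (Fin x) b}"
definition fIco :: "efermat \<Rightarrow> efermat \<Rightarrow> fermat set" where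
  "fIco a b = {x. efle a (Fin x) \<and> eflt (Fin x) b}"
definition fIoc :: "efermat \<Rightarrow> efermat \<Rightarrow> fermat set" where
  "fIoc a b = {x. eflt a (Fin x) \<and> efle (Fin x) b}"

definition is_finterval :: "fermat set \<Rightarrow> bool" where
  "is_finterval J \<longleftrightarrow> (\<exists>a b. efle a b \<and>
      (J = fIcc a b \<or> J = fIoo a b \<or> J = fIco a b \<or> J = fIoc a b))"

definition fermat_topology :: "fermat topology" where
  "fermat_topology = pullback_topology UNIV st euclidean"

end

theory Submission
  imports Defs
begin

lemma tpow_tendsto:
  assumes "a \<ge> 0" shows "((\<lambda>t. tpow t a) \<longlongrightarrow> tpow 0 a) (at_right 0)"
proof (cases "a = 0")
  case True then show ?thesis by (simp add: tpow_def)
next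
  case False
  then have "a > 0" using assms by simp
  have "((\<lambda>t. t powr a) \<longlongrightarrow> 0 powr a) (at_right 0)"
    using \<open>a > 0\<close> by (intro tendsto_powr') (auto intro: tendsto_ident_at simp: eventually_at_right_field intro!: exI[of _ 1])
  then show ?thesis using False by (simp add: tpow_def)
qed

lemma little_o_tendsto: assumes "little_o_t h" shows "(h \<longlongrightarrow> 0) (at_right 0)"
proof -
  have 1: "((\<lambda>t. h t / t) \<longlongrightarrow> 0) (at_right 0)" using assms by (simp add: little_o_t_def)
  have "((\<lambda>t. (h t / t) * t) \<longlongrightarrow> 0 * 0) (at_right 0)"
    by (intro tendsto_mult 1) (auto intro: tendsto_ident_at)
  moreover have "eventually (\<lambda>t. (h t / t) * t = h t) (at_right (0::real))"
    by (auto simp: eventually_at_right_field intro!: exI[of _ 1])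
  ultimately show ?thesis by (simp add: tendsto_cong)
qed

lemma Ro_tendsto: assumes "Ro x" shows "(x \<longlongrightarrow> x 0) (at_right 0)"
proof -
  obtain r :: real and k :: nat and \<alpha> :: "nat \<Rightarrow> real" and a :: "nat \<Rightarrow> real" where a: "\<forall>i<k. a i \<ge> 0"
    and h: "little_o_t (\<lambda>t. x t - (r + (\<Sum>i<k. \<alpha> i * tpow t (a i))))"
    using assms unfolding Ro_def by blast
  define P where "P = (\<lambda>t. r + (\<Sum>i<k. \<alpha> i * tpow t (a i)))"
  have P: "(P \<longlongrightarrow> P 0) (at_right 0)" unfolding P_def
    using a by (intro tendsto_intros tpow_tendsto) auto
  have hh: "((\<lambda>t. x t - P t) \<longlongrightarrow> 0) (at_right 0)" using little_o_tendsto[OF h] by (simp add: P_def)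
  have h0: "x 0 = P 0" using h by (simp add: little_o_t_def P_def)
  have "((\<lambda>t. (x t - P t) + P t) \<longlongrightarrow> 0 + P 0) (at_right 0)" by (intro tendsto_add hh P)
  then show ?thesis using h0 by simp
qed

lemma fr_rel_zero_0: "fr_rel z (\<lambda>t. 0) \<Longrightarrow> z 0 = 0"
  by (simp add: fr_rel_def little_o_t_def)

lemma fle_st: assumes "fle p q" shows "st p \<le> st q"
proof -
  obtain x y z \<delta> where "fr_rel x x" "fr_rel y y" "abs_fermat x = p" "abs_fermat y = q"
    "fr_rel z (\<lambda>t. 0)" "\<delta> > 0" "\<forall>t. 0 \<le> t \<and> t < \<delta> \<longrightarrow> x t \<le> y t + z t"
    using assms unfolding fle_def by blast
  then have "x 0 \<le> y 0 + z 0" by auto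
  moreover have "z 0 = 0" using fr_rel_zero_0 \<open>fr_rel z (\<lambda>t. 0)\<close> by blast
  moreover have "st p = x 0" using st.abs_eq[OF \<open>fr_rel x x\<close>] \<open>abs_fermat x = p\<close> by simp
  moreover have "st q = y 0" using st.abs_eq[OF \<open>fr_rel y y\<close>] \<open>abs_fermat y = q\<close> by simp
  ultimately show ?thesis by simp
qed

lemma Ro_const: "Ro (\<lambda>t. r)"
  unfolding Ro_def by (rule exI[of _ r], rule exI[of _ 0]) (simp add: little_o_t_zero)

lemma fr_rel_const: "fr_rel (\<lambda>t. r) (\<lambda>t. r)"
  by (simp add: fr_rel_def Ro_const little_o_t_zero)

lemma st_surj: "st (abs_fermat (\<lambda>t. r)) = r"
  using st.abs_eq[OF fr_rel_const] by simp

lemma st_less_fle: assumes "st p < st q" shows "fle p q"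
proof -
  define x where "x = rep_fermat p"
  define y where "y = rep_fermat q"
  have rx: "fr_rel x x" "abs_fermat x = p" unfolding x_def
    using Quotient3_fermat Quotient3_rep_reflp Quotient3_abs_rep by metis+
  have ry: "fr_rel y y" "abs_fermat y = q" unfolding y_def
    using Quotient3_fermat Quotient3_rep_reflp Quotient3_abs_rep by metis+
  have lt: "x 0 < y 0" using assms by (simp add: st.rep_eq x_def y_def)
  have "((\<lambda>t. y t - x t) \<longlongrightarrow> y 0 - x 0) (at_right 0)"
    using rx ry by (intro tendsto_diff Ro_tendsto) (auto simp: fr_rel_def)
  then have "eventually (\<lambda>t. y t - x t > 0) (at_right 0)"
    using lt by (intro order_tendstoD) auto
  then obtain b where b: "b > 0" "\<forall>t>0. t < b \<longrightarrow> y t - x t > 0"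
    by (auto simp: eventually_at_right_field)
  have "\<forall>t. 0 \<le> t \<and> t < b \<longrightarrow> x t \<le> y t + 0"
  proof (intro allI impI)
    fix t assume "0 \<le> t \<and> t < b"
    then have t: "0 \<le> t" "t < b" by auto
    show "x t \<le> y t + 0"
    proof (cases "t = 0")
      case True then show ?thesis using lt by simp
    next
      case False
      then have "y t - x t > 0" using b(2) t by simp
      then show ?thesis by simp
    qed
  qed
  moreover have "fr_rel (\<lambda>t. 0) (\<lambda>t. 0)" using fr_rel_const[of 0] .
  ultimately show ?thesis unfolding fle_def
    by (intro exI[of _ x] exI[of _ y] exI[of _ "\<lambda>t. 0"] conjI rx ry exI[of _ b] b(1))
qed

lemma lower: assumes "efle a (Fin x)" "st x < st z" shows "efle a (Fin z) \<and> eflt a (Fin z)"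
proof (cases a)
  case NegInf then show ?thesis by (simp add: eflt_def)
next
  case (Fin c)
  then have "st c < st z" using assms fle_st[of c x] by simp
  then have "fle c z" "c \<noteq> z" using st_less_fle by auto
  then show ?thesis using Fin by (simp add: eflt_def)
next
  case PosInf then show ?thesis using assms by simp
qed

lemma upper: assumes "efle (Fin x) b" "st z < st x" shows "efle (Fin z) b \<and> eflt (Fin z) b"
proof (cases b)
  case NegInf then show ?thesis using assms by simp
next
  case (Fin c)
  then have "st z < st c" using assms fle_st[of x c] by simp
  then have "fle z c" "z \<noteq> c" using st_less_fle by auto
  then show ?thesis using Fin by (simp add: eflt_def)
next
  case PosInf then show ?thesis by (simp add: eflt_def)
qed

lemma K: assumes "is_finterval J" "x \<in> J" "y \<in> J" "st x < st z" "st z < st y"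
  shows "z \<in> J"
proof -
  obtain a b where J: "J = fIcc a b \<or> J = fIoo a b \<or> J = fIco a b \<or> J = fIoc a b"
    using assms(1) unfolding is_finterval_def by blast
  have le1: "eflt u v \<Longrightarrow> efle u v" for u v by (simp add: eflt_def)
  note L = lower[OF _ assms(4)] and U = upper[OF _ assms(5)]
  from J show ?thesis
  proof (elim disjE)
    assume J: "J = fIcc a b"
    then have "efle a (Fin x)" "efle (Fin y) b" using assms(2,3) by (auto simp: fIcc_def)
    then show ?thesis using L U J by (simp add: fIcc_def)
  next
    assume J: "J = fIoo a b"
    then have "efle a (Fin x)" "efle (Fin y) b" using assms(2,3) le1 by (auto simp: fIoo_def)
    then show ?thesis using L U J by (simp add: fIoo_def)
  next
    assume J: "J = fIco a b"
    then have "efle a (Fin x)" "efle (Fin y) b" using assms(2,3) le1 by (auto simp: fIco_def)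
    then show ?thesis using L U J by (simp add: fIco_def)
  next
    assume J: "J = fIoc a b"
    then have "efle a (Fin x)" "efle (Fin y) b" using assms(2,3) le1 by (auto simp: fIoc_def)
    then show ?thesis using L U J by (simp add: fIoc_def)
  qed
qed

lemma bridge: assumes "connected (st ` S)" shows "connectedin fermat_topology S"
proof -
  have c: "connectedin euclidean (st ` S)" using assms by (simp add: connectedin_iff_connected)
  show ?thesis unfolding connectedin
  proof (intro conjI notI)
    show "S \<subseteq> topspace fermat_topology"
      by (simp add: fermat_topology_def topspace_pullback_topology)
  next
    assume "\<exists>E1 E2. openin fermat_topology E1 \<and> openin fermat_topology E2 \<and>
             S \<subseteq> E1 \<union> E2 \<and> E1 \<inter> E2 \<inter> S = {} \<and> E1 \<inter> S \<noteq> {} \<and> E2 \<inter> S \<noteq> {}"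
    then obtain U1 U2 where U: "open U1" "open U2" "S \<subseteq> st -` U1 \<union> st -` U2"
      "st -` U1 \<inter> st -` U2 \<inter> S = {}" "st -` U1 \<inter> S \<noteq> {}" "st -` U2 \<inter> S \<noteq> {}"
      unfolding fermat_topology_def openin_pullback_topology by auto
    have "openin euclidean U1 \<and> openin euclidean U2 \<and> st ` S \<subseteq> U1 \<union> U2 \<and>
       U1 \<inter> U2 \<inter> st ` S = {} \<and> U1 \<inter> st ` S \<noteq> {} \<and> U2 \<inter> st ` S \<noteq> {}"
    proof (intro conjI)
      show "openin euclidean U1" "openin euclidean U2" using U(1,2) by simp_all
      show "st ` S \<subseteq> U1 \<union> U2" using U(3) by blast
      show "U1 \<inter> U2 \<inter> st ` S = {}" using U(4) by blast
      show "U1 \<inter> st ` S \<noteq> {}" using U(5) by blast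
      show "U2 \<inter> st ` S \<noteq> {}" using U(6) by blast
    qed
    moreover have "\<not> (\<exists>E1 E2. openin euclidean E1 \<and> openin euclidean E2 \<and> st ` S \<subseteq> E1 \<union> E2 \<and>
       E1 \<inter> E2 \<inter> st ` S = {} \<and> E1 \<inter> st ` S \<noteq> {} \<and> E2 \<inter> st ` S \<noteq> {})"
      using c unfolding connectedin by (rule conjunct2)
    ultimately show False by blast
  qed
qed

theorem lemma6:
  assumes "is_finterval J"
  shows "connectedin fermat_topology J \<and> connectedin fermat_topology (fermat_topology interior_of J)"
proof
  have "is_interval (st ` J)"
    unfolding is_interval_1
  proof (intro ballI allI impI)
    fix u v r assume uv: "u \<in> st ` J" "v \<in> st ` J" "u \<le> r \<and> r \<le> v"
    then obtain x y where xy: "x \<in> J" "y \<in> J" "st x = u" "st y = v" by auto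
    show "r \<in> st ` J"
    proof (cases "r = u \<or> r = v")
      case True then show ?thesis using uv by auto
    next
      case False
      let ?z = "abs_fermat (\<lambda>t. r)"
      have "?z \<in> J" using K[OF assms xy(1,2), of ?z] xy uv False st_surj[of r] by auto
      then show ?thesis using st_surj[of r] by force
    qed
  qed
  then show "connectedin fermat_topology J" by (intro bridge is_interval_connected)
next
  define W where "W = {r. \<forall>z. st z = r \<longrightarrow> z \<in> J}"
  have surj: "\<And>X. st ` (st -` X) = X"
    using st_surj by (metis surj_def surj_image_vimage_eq)
  have int: "fermat_topology interior_of J = st -` interior W"
  proof (rule set_eqI, rule iffI)
    fix x assume "x \<in> fermat_topology interior_of J"
    then obtain U where U: "open U" "st x \<in> U" "st -` U \<subseteq> J"
      unfolding interior_of_def fermat_topology_def openin_pullback_topology by auto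
    then have "U \<subseteq> W" unfolding W_def by auto
    then show "x \<in> st -` interior W" using U interior_maximal[OF \<open>U \<subseteq> W\<close> \<open>open U\<close>] by auto
  next
    fix x assume x: "x \<in> st -` interior W"
    have "openin fermat_topology (st -` interior W)"
      unfolding fermat_topology_def openin_pullback_topology by auto
    moreover have "st -` interior W \<subseteq> J" using interior_subset[of W] unfolding W_def by auto
    ultimately show "x \<in> fermat_topology interior_of J" using x unfolding interior_of_def by blast
  qed
  have "is_interval W"
    unfolding is_interval_1
  proof (intro ballI allI impI)
    fix u v r assume uv: "u \<in> W" "v \<in> W" "u \<le> r \<and> r \<le> v"
    obtain x y where xy: "st x = u" "st y = v" using st_surj by blast
    then have xyJ: "x \<in> J" "y \<in> J" using uv unfolding W_def by auto
    show "r \<in> W"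
    proof (cases "r = u \<or> r = v")
      case True then show ?thesis using uv by auto
    next
      case False
      then show ?thesis unfolding W_def using K[OF assms xyJ] xy uv by auto
    qed
  qed
  then have "convex (interior W)" by (simp add: convex_interior is_interval_convex_1)
  then have "connected (st ` (st -` interior W))" using surj by (simp add: convex_connected)
  then show "connectedin fermat_topology (fermat_topology interior_of J)"
    unfolding int by (rule bridge)
qed
end
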